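(* Let $|\cdot|$ be a norm on $\mathbb{R}^d$ with constants $c_1,c_2\in(0,\infty)$ such that $c_1\|x\|\le|x|\le c_2\|x\|$ for all $x$. Let $k\in\mathbb{N}$, $\eta\colon\mathbb{R}^d\to\mathbb{R}^k$, $\mu\in\mathbb{R}^k$, $A\colon\mathbb{R}^d\to\mathbb{R}$, and let $\rho\colon\mathbb{R}^d\to(0,\infty)$ be proportional to $x\mapsto\exp(\eta(x)^T\mu-A(x))$. Assume there exist an increasing function $\varphi\colon[0,\infty)\to\mathbb{R}$ and a point $x_0\in\mathbb{R}^d$ with $\eta(x)^T\mu-A(x)=-\varphi(|x-x_0|)$ for all $x\in\mathbb{R}^d$ (equivalently, $\rho$ is proportional to $x\mapsto\exp(-\varphi(|x-x_0|))$). Then: (i) $\rho$ is bounded away from $0$ and from $\infty$ on every compact subset of $\mathbb{R}^d$; (ii) with $R=4\tfrac{c_2}{c_1}\|x_0\|$ and $\alpha=\tfrac{c_1}{2c_2}$, one has $B_{\alpha\|x\|}(0)\subseteq G_{\rho(x)}$ for all $x$ with $\|x\|>R$.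
   Context: $\|\cdot\|$ is the Euclidean norm, $B_r(y)=\{z\in\mathbb{R}^d:\|z-y\|\le r\}$, and $G_t=\{y\in\mathbb{R}^d:\rho(y)\ge t\}$ for $t\ge0$. *)

theory Defs
  imports "HOL-Analysis.Analysis"
begin

definition superlevel :: "('a \<Rightarrow> real) \<Rightarrow> real \<Rightarrow> 'a set" where
  "superlevel \<rho> t = {y. \<rho> y \<ge> t}"

definition is_norm_fun :: "('a::real_vector \<Rightarrow> real) \<Rightarrow> bool" where
  "is_norm_fun N \<longleftrightarrow> (\<forall>x. N x \<ge> 0) \<and> (\<forall>x. N x = 0 \<longleftrightarrow> x = 0)
     \<and> (\<forall>x y. N (x + y) \<le> N x + N y) \<and> (\<forall>c x. N (c *\<^sub>R x) = \<bar>c\<bar> * N x)"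

end

theory Submission
  imports Defs
begin

theorem corollary1:
  fixes N :: "'a::euclidean_space \<Rightarrow> real"
    and c1 c2 :: real
    and k :: nat
    and \<eta> :: "'a \<Rightarrow> nat \<Rightarrow> real"
    and \<mu> :: "nat \<Rightarrow> real"
    and A :: "'a \<Rightarrow> real"
    and \<rho> :: "'a \<Rightarrow> real"
    and \<phi> :: "real \<Rightarrow> real"
    and x0 :: 'a
  assumes N_norm: "is_norm_fun N"
    and c1_pos: "c1 > 0" and c2_pos: "c2 > 0"
    and N_equiv: "\<forall>x. c1 * norm x \<le> N x \<and> N x \<le> c2 * norm x"
    and \<rho>_pos: "\<forall>x. \<rho> x > 0"
    and \<rho>_prop: "\<exists>Z>0. \<forall>x. \<rho> x = Z * exp ((\<Sum>i<k. \<eta> x i * \<mu> i) - A x)"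
    and \<phi>_mono: "mono_on {0..} \<phi>"
    and radial: "\<forall>x. (\<Sum>i<k. \<eta> x i * \<mu> i) - A x = - \<phi> (N (x - x0))"
  shows "(\<forall>K. compact K \<longrightarrow> (\<exists>a b. 0 < a \<and> (\<forall>x\<in>K. a \<le> \<rho> x \<and> \<rho> x \<le> b)))
       \<and> (\<forall>x. norm x > 4 * (c2 / c1) * norm x0 \<longrightarrow>
              cball 0 ((c1 / (2 * c2)) * norm x) \<subseteq> superlevel \<rho> (\<rho> x))"
proof -
  obtain Z where Z: "Z > 0" "\<forall>x. \<rho> x = Z * exp (- \<phi> (N (x - x0)))"
    using \<rho>_prop radial by auto
  have Nnn: "\<And>x. N x \<ge> 0" using N_norm unfolding is_norm_fun_def by auto
  have key: "\<rho> y \<ge> \<rho> x" if "N (y - x0) \<le> N (x - x0)" for x y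
  proof -
    have "\<phi> (N (y - x0)) \<le> \<phi> (N (x - x0))"
      using \<phi>_mono that Nnn by (auto simp: mono_on_def)
    then show ?thesis using Z by simp
  qed
  have P1: "\<forall>K. compact K \<longrightarrow> (\<exists>a b. 0 < a \<and> (\<forall>x\<in>K. a \<le> \<rho> x \<and> \<rho> x \<le> b))"
  proof (intro allI impI)
    fix K :: "'a set" assume "compact K"
    then obtain M where M: "\<forall>x\<in>K. norm x \<le> M" using compact_imp_bounded bounded_iff by metis
    define B where "B = c2 * (M + norm x0)"
    have lo: "Z * exp (- \<phi> B) \<le> \<rho> x" if "x \<in> K" for x
    proof -
      have "N (x - x0) \<le> c2 * norm (x - x0)" using N_equiv by blast
      also have "\<dots> \<le> c2 * (M + norm x0)"
        using M that c2_pos norm_triangle_ineq4[of x x0] by (intro mult_left_mono) auto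
      finally have "N (x - x0) \<le> B" unfolding B_def .
      then have "\<phi> (N (x - x0)) \<le> \<phi> B"
        using \<phi>_mono Nnn[of "x - x0"] by (auto simp: mono_on_def)
      then show ?thesis using Z by simp
    qed
    have hi: "\<rho> x \<le> Z * exp (- \<phi> 0)" for x
    proof -
      have "\<phi> 0 \<le> \<phi> (N (x - x0))"
        using \<phi>_mono Nnn[of "x - x0"] by (auto simp: mono_on_def)
      then show ?thesis using Z by simp
    qed
    show "\<exists>a b. 0 < a \<and> (\<forall>x\<in>K. a \<le> \<rho> x \<and> \<rho> x \<le> b)"
      using lo hi Z by (intro exI[of _ "Z * exp (- \<phi> B)"] exI[of _ "Z * exp (- \<phi> 0)"]) auto
  qed
  have P2: "cball 0 ((c1 / (2 * c2)) * norm x) \<subseteq> superlevel \<rho> (\<rho> x)"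
    if hx: "norm x > 4 * (c2 / c1) * norm x0" for x
  proof
    fix y :: 'a assume "y \<in> cball 0 ((c1 / (2 * c2)) * norm x)"
    then have hy: "norm y \<le> (c1 / (2 * c2)) * norm x" by simp
    have x0': "4 * c2 * norm x0 < c1 * norm x" using hx c1_pos by (simp add: field_simps)
    have "x \<noteq> 0"
    proof
      assume "x = 0"
      then have "4 * c2 * norm x0 < 0" using x0' by simp
      moreover have "0 \<le> 4 * c2 * norm x0" using c2_pos by simp
      ultimately show False by linarith
    qed
    then have "norm x > 0" by simp
    have "c1 * norm x \<le> c2 * norm x" using N_equiv order_trans by blast
    then have c12: "c1 \<le> c2" using \<open>norm x > 0\<close> by simp
    have hy2: "c2 * norm y \<le> c1 * norm x / 2"
      using hy c2_pos by (simp add: field_simps)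
    have "N (y - x0) \<le> c2 * norm (y - x0)" using N_equiv by blast
    also have "\<dots> \<le> c2 * (norm y + norm x0)"
      using c2_pos norm_triangle_ineq4[of y x0] by (intro mult_left_mono) auto
    also have "\<dots> \<le> c1 * (norm x - norm x0)"
    proof -
      have "(c1 + c2) * norm x0 \<le> 2 * c2 * norm x0"
        using c12 by (intro mult_right_mono) auto
      then show ?thesis using hy2 x0' by (simp add: algebra_simps)
    qed
    also have "\<dots> \<le> c1 * norm (x - x0)"
      using c1_pos norm_triangle_ineq2[of x x0] by (intro mult_left_mono) auto
    also have "\<dots> \<le> N (x - x0)" using N_equiv by blast
    finally show "y \<in> superlevel \<rho> (\<rho> x)" using key unfolding superlevel_def by auto
  qed
  show ?thesis using P1 P2 by blast
qed

end
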